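(* Let $n,r,w\ge 1$ be integers and $N=nr$. The modular $N\times N$ optical cross-connect $\hat{\mathcal{Q}}(n\times r,w)$ defined below is nonblocking at each wavelength: for every wavelength $\lambda\in\{\lambda_0,\dots,\lambda_{w-1}\}$, every input $1\times n$ WSS $ap'$ and every output $n\times1$ WSS $bq'$ ($a,b\in\{0,\dots,n-1\}$, $p',q'\in\{0,\dots,r-1\}$), and every set of already established connections, if $\lambda$ is idle at input $ap'$ and idle at output $bq'$, then a connection at wavelength $\lambda$ from input $ap'$ to output $bq'$ can be established without altering the existing connections.
   Context: Model of components. A $1\times k$ wavelength selective switch (WSS) has one input and $k$ outputs; each wavelength present at its input can be switched to any one of its $k$ outputs, independently of the other wavelengths. A $k\times 1$ WSS is the inverse: it forwards to its single output signals arriving at its $k$ inputs, provided no two signals on the same wavelength are fed to it simultaneously (each wavelength at the output comes from at most one input, chosen independently per wavelength). For an integer $r$, the classical $r\times r$ OXC $\mathcal{Q}(r,w)$ consists of $r$ input $1\times r$ WSSs numbered $0,\dots,r-1$ (its inputs), $r$ output $r\times 1$ WSSs numbered $0,\dots,r-1$ (its outputs), and, for all $p',q'$, exactly one fiber from the $q'$th output of input WSS $p'$ to the $p'$th input of output WSS $q'$. The modular OXC $\hat{\mathcal{Q}}(n\times r,w)$ consists of: $N$ input $1\times n$ WSSs labelled $ap'$ (the $p$th one, $p=ar+p'$; these are the OXC inputs), $n^2$ classical $r\times r$ OXCs $\mathcal{Q}_{ab}(r)$ ($a,b\in\{0,\dots,n-1\}$), and $N$ output $n\times 1$ WSSs labelled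 $bq'$ (the $q$th one, $q=br+q'$; these are the OXC outputs). The $b$th output of $1\times n$ WSS $ap'$ is connected to the $p'$th input of $\mathcal{Q}_{ab}(r)$, and the $q'$th output of $\mathcal{Q}_{ab}(r)$ is connected to the $a$th input of $n\times1$ WSS $bq'$. Every port and link carries wavelengths $\lambda_0,\dots,\lambda_{w-1}$; a connection at wavelength $\lambda$ from input $ap'$ to output $bq'$ uses $\lambda$ along a path of links from that input to that output; each wavelength on each port or link is used by at most one connection, and a wavelength is idle at a port if no existing connection uses it there. *)

theory Defs
  imports Main
begin

text \<open>InPort a p      : the input port of the input 1xn WSS a p'  (OXC input ap')
  InLink a p b    : fiber from output b of input WSS a p' to input p' of Q_ab(r)
  MidLink a b p q : fiber inside Q_ab(r) from output q' of its input WSS p'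
                    to input p' of its output WSS q'
  OutLink a b q   : fiber from output q' of Q_ab(r) to input a of output WSS b q'
  OutPort b q     : the output port of the output nx1 WSS b q' (OXC output bq')\<close>

datatype link =
    InPort nat nat
  | InLink nat nat nat
  | MidLink nat nat nat nat
  | OutLink nat nat nat
  | OutPort nat nat

fun adj :: "nat \<Rightarrow> nat \<Rightarrow> link \<Rightarrow> link \<Rightarrow> bool" where
  "adj n r (InPort a p) l =
     (\<exists>b. b < n \<and> a < n \<and> p < r \<and> l = InLink a p b)"
| "adj n r (InLink a p b) l =
     (\<exists>q. q < r \<and> a < n \<and> b < n \<and> p < r \<and> l = MidLink a b p q)"
| "adj n r (MidLink a b p q) l =
     (a < n \<and> b < n \<and> p < r \<and> q < r \<and> l = OutLink a b q)"
| "adj n r (OutLink a b q) l =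
     (a < n \<and> b < n \<and> q < r \<and> l = OutPort b q)"
| "adj n r (OutPort b q) l = False"

definition valid_path :: "nat \<Rightarrow> nat \<Rightarrow> nat \<Rightarrow> nat \<Rightarrow> nat \<Rightarrow> nat \<Rightarrow> link list \<Rightarrow> bool" where
  "valid_path n r a p b q ps \<longleftrightarrow>
     ps \<noteq> [] \<and> hd ps = InPort a p \<and> last ps = OutPort b q \<and>
     (\<forall>i. Suc i < length ps \<longrightarrow> adj n r (ps ! i) (ps ! Suc i))"

text \<open>A connection is a pair (wavelength index, path of links); wavelength k stands for lambda_k.\<close>
type_synonym connection = "nat \<times> link list"

definition is_connection :: "nat \<Rightarrow> nat \<Rightarrow> nat \<Rightarrow> connection \<Rightarrow> bool" where
  "is_connection n r w c \<longleftrightarrow>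
     fst c < w \<and> (\<exists>a p b q. valid_path n r a p b q (snd c))"

definition valid_state :: "nat \<Rightarrow> nat \<Rightarrow> nat \<Rightarrow> connection set \<Rightarrow> bool" where
  "valid_state n r w C \<longleftrightarrow>
     (\<forall>c\<in>C. is_connection n r w c) \<and>
     (\<forall>c1\<in>C. \<forall>c2\<in>C. c1 \<noteq> c2 \<longrightarrow> fst c1 = fst c2 \<longrightarrow> set (snd c1) \<inter> set (snd c2) = {})"

definition idle :: "connection set \<Rightarrow> nat \<Rightarrow> link \<Rightarrow> bool" where
  "idle C lam l \<longleftrightarrow> (\<forall>c\<in>C. fst c = lam \<longrightarrow> l \<notin> set (snd c))"

end

theory Submission
  imports Defs
begin

lemma pred_in:
  assumes "valid_path n r a p b q ps" "x \<in> set ps" "x \<noteq> InPort a p"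
  shows "\<exists>y\<in>set ps. adj n r y x"
proof -
  obtain i where i: "i < length ps" "ps ! i = x" using assms(2) by (auto simp: in_set_conv_nth)
  have "i \<noteq> 0"
  proof
    assume "i = 0"
    then show False using assms(1,3) i by (auto simp: valid_path_def hd_conv_nth)
  qed
  then obtain j where j: "i = Suc j" by (cases i) auto
  have "adj n r (ps ! j) (ps ! Suc j)" using assms(1) i j by (auto simp: valid_path_def)
  then show ?thesis using i j by (metis Suc_lessD nth_mem)
qed

lemma succ_in:
  assumes "valid_path n r a p b q ps" "x \<in> set ps" "x \<noteq> OutPort b q"
  shows "\<exists>y\<in>set ps. adj n r x y"
proof -
  obtain i where i: "i < length ps" "ps ! i = x" using assms(2) by (auto simp: in_set_conv_nth)
  have "Suc i < length ps"
  proof (rule ccontr)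
    assume "\<not> ?thesis"
    then have "i = length ps - 1" using i by simp
    then show False using assms(1,3) i by (auto simp: valid_path_def last_conv_nth)
  qed
  moreover have "adj n r (ps ! i) (ps ! Suc i)" using assms(1) i calculation by (auto simp: valid_path_def)
  ultimately show ?thesis using i by (metis nth_mem)
qed

lemma inlink:
  assumes "valid_path n r a' p' b' q' ps" "InLink a p b \<in> set ps"
  shows "InPort a p \<in> set ps"
proof -
  obtain y where "y \<in> set ps" "adj n r y (InLink a p b)"
    using pred_in[OF assms] by auto
  moreover from this(2) have "y = InPort a p" by (cases y) auto
  ultimately show ?thesis by simp
qed

lemma midlink:
  assumes "valid_path n r a' p' b' q' ps" "MidLink a b p q \<in> set ps"
  shows "InPort a p \<in> set ps"
proof -
  obtain y where "y \<in> set ps" "adj n r y (MidLink a b p q)"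
    using pred_in[OF assms] by auto
  moreover from this(2) have "y = InLink a p b" by (cases y) auto
  ultimately have "InLink a p b \<in> set ps" by simp
  then show ?thesis using inlink assms(1) by blast
qed

lemma outlink:
  assumes "valid_path n r a' p' b' q' ps" "OutLink a b q \<in> set ps"
  shows "OutPort b q \<in> set ps"
proof -
  obtain y where "y \<in> set ps" "adj n r (OutLink a b q) y"
    using succ_in[OF assms] by auto
  then show ?thesis by auto
qed

theorem theorem1:
  fixes n r w lam a p b q :: nat and C :: "connection set"
  assumes "n \<ge> 1" and "r \<ge> 1" and "w \<ge> 1"
    and "lam < w" and "a < n" and "b < n" and "p < r" and "q < r"
    and "valid_state n r w C"
    and "idle C lam (InPort a p)" and "idle C lam (OutPort b q)"
  shows "\<exists>ps. valid_path n r a p b q ps \<and> valid_state n r w (C \<union> {(lam, ps)})"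
proof -
  define ps where "ps = [InPort a p, InLink a p b, MidLink a b p q, OutLink a b q, OutPort b q]"
  have vp: "valid_path n r a p b q ps"
    unfolding valid_path_def ps_def
  proof (intro conjI allI impI)
    fix i assume "Suc i < length [InPort a p, InLink a p b, MidLink a b p q, OutLink a b q, OutPort b q]"
    then have "i = 0 \<or> i = 1 \<or> i = 2 \<or> i = 3" by auto
    then show "adj n r ([InPort a p, InLink a p b, MidLink a b p q, OutLink a b q, OutPort b q] ! i)
      ([InPort a p, InLink a p b, MidLink a b p q, OutLink a b q, OutPort b q] ! Suc i)"
      using assms by (auto simp: numeral_eq_Suc)
  qed auto
  have disj: "set (snd c) \<inter> set ps = {}" if c: "c \<in> C" "fst c = lam" for c
  proof -
    obtain a' p' b' q' where v: "valid_path n r a' p' b' q' (snd c)"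
      using assms(9) c by (auto simp: valid_state_def is_connection_def)
    have i1: "InPort a p \<notin> set (snd c)" and i2: "OutPort b q \<notin> set (snd c)"
      using assms(10,11) c by (auto simp: idle_def)
    show ?thesis unfolding ps_def
      using i1 i2 inlink[OF v, of a p b] midlink[OF v, of a b p q] outlink[OF v, of a b q]
      by auto
  qed
  have notin: "(lam, ps) \<notin> C"
  proof
    assume "(lam, ps) \<in> C"
    with assms(10) show False by (auto simp: idle_def ps_def)
  qed
  have "valid_state n r w (C \<union> {(lam, ps)})"
    unfolding valid_state_def
  proof (intro conjI)
    show "\<forall>c\<in>C \<union> {(lam, ps)}. is_connection n r w c"
      using assms(4,9) vp by (auto simp: valid_state_def is_connection_def)
    show "\<forall>c1\<in>C \<union> {(lam, ps)}. \<forall>c2\<in>C \<union> {(lam, ps)}. c1 \<noteq> c2 \<longrightarrow> fst c1 = fst c2 \<longrightarrow>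
        set (snd c1) \<inter> set (snd c2) = {}"
      using assms(9) disj by (auto simp: valid_state_def)
  qed
  then show ?thesis using vp by blast
qed

end
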